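(* In the setting of the classical risk model below, suppose Assumption A1 holds and $B_0\in\mathcal{S}$. Then for every sufficiently small $\epsilon>0$, $$\lim_{u\to\infty}\frac{\mathbb{P}\left(\sup_{n\ge1}\left\{n(p\mu^{-1}-\epsilon)-p\sum_{i=1}^n T_i\right\}\ge u\right)}{\overline{B}_0(u)}=0.$$
   Context: Risk model: $U_t=u+pt-\sum_{i=1}^{N_t}C_i$ with $u>0$, premium rate $p>0$, $C_i$ i.i.d. nonnegative claims with distribution function $B$ and $\mathbb{E}[C_1]<\infty$, independent of the simple point process $N_t$ ($N_0=0$) with arrival times $\tau_i$ and inter-arrival times $T_i=\tau_i-\tau_{i-1}$, $\tau_0=0$. For a distribution function $F$, $\overline F=1-F$. $B_0(x):=\frac{1}{\mathbb{E}[C_1]}\int_0^x\overline B(y)\,dy$. $\mathcal S$ (subexponential distributions) is the class of distribution functions $F$ on $[0,\infty)$ with $\lim_{x\to\infty}\mathbb{P}(X_1+X_2>x)/\mathbb{P}(X_1>x)=2$ for $X_1,X_2$ i.i.d. with distribution $F$. Assumption A1: (i) $(N_t/t\in\cdot)$ satisfies a large deviation principle with rate function $I$ such that $I(x)=0$ iff $x=\mu$; (ii) $I$ is increasing on $[\mu,\infty)$ and decreasing on $[0,\mu]$; (iii) $\rho:=\mu\mathbb{E}[C_1]/p<1$; (iv) there is $\theta>0$ with $\mathbb{E}[e^{\theta\sum_{i=1}^nT_i}]<\infty$ for all $n\in\mathbb{N}$. *)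

theory Defs
  imports "HOL-Probability.Probability"
begin

definition nonneg_cdf :: "(real \<Rightarrow> real) \<Rightarrow> bool" where
  "nonneg_cdf F \<longleftrightarrow> mono F \<and> (\<forall>x. continuous (at_right x) F) \<and> (\<forall>x<0. F x = 0)
     \<and> (F \<longlongrightarrow> 1) at_top"

text \<open>Subexponential distributions: for X1, X2 iid with distribution F (the Lebesgue-Stieltjes
  measure of F), P(X1 + X2 > x) / P(X1 > x) tends to 2.\<close>
definition subexponential :: "(real \<Rightarrow> real) \<Rightarrow> bool" where
  "subexponential F \<longleftrightarrow> nonneg_cdf F \<and>
     ((\<lambda>x. measure (interval_measure F \<Otimes>\<^sub>M interval_measure F) {z. fst z + snd z > x}
            / (1 - F x)) \<longlongrightarrow> 2) at_top"

definition dist_fun :: "'a measure \<Rightarrow> ('a \<Rightarrow> real) \<Rightarrow> real \<Rightarrow> real" where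
  "dist_fun M X x = measure M {\<omega> \<in> space M. X \<omega> \<le> x}"

definition integrated_tail :: "'a measure \<Rightarrow> ('a \<Rightarrow> real) \<Rightarrow> real \<Rightarrow> real" where
  "integrated_tail M X x =
     (1 / integral\<^sup>L M X) * (\<integral>y\<in>{0..x}. (1 - dist_fun M X y) \<partial>lborel)"

definition elog :: "real \<Rightarrow> ereal" where
  "elog x = (if x \<le> 0 then -\<infinity> else ereal (ln x))"

definition rate_function :: "(real \<Rightarrow> ereal) \<Rightarrow> bool" where
  "rate_function I \<longleftrightarrow> (\<forall>x. 0 \<le> I x) \<and> (\<forall>c. closed {x. I x \<le> c})"

definition LDP :: "'a measure \<Rightarrow> (real \<Rightarrow> 'a \<Rightarrow> real) \<Rightarrow> (real \<Rightarrow> ereal) \<Rightarrow> bool" where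
  "LDP M Z I \<longleftrightarrow> rate_function I \<and>
     (\<forall>F. closed F \<longrightarrow>
        Limsup at_top (\<lambda>t. ereal (1 / t) * elog (measure M {\<omega> \<in> space M. Z t \<omega> \<in> F}))
          \<le> - (INF x\<in>F. I x)) \<and>
     (\<forall>G. open G \<longrightarrow>
        - (INF x\<in>G. I x)
          \<le> Liminf at_top (\<lambda>t. ereal (1 / t) * elog (measure M {\<omega> \<in> space M. Z t \<omega> \<in> G})))"

end

theory Submission
  imports Defs
begin

lemma cdf_facts:
  assumes "nonneg_cdf F"
  shows "real_distribution (interval_measure F)"
    and "\<And>x. measure (interval_measure F) {..x} = F x"
    and "\<And>x. measure (interval_measure F) {x<..} = 1 - F x"
    and "measure (interval_measure F) {..<0} = 0"
    and "\<And>a. 0 \<le> a \<Longrightarrow> measure (interval_measure F) {0..a} = F a"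
    and "measure (interval_measure F) {0..} = 1"
    and "\<And>a b. a \<le> b \<Longrightarrow> measure (interval_measure F) {a<..b} = F b - F a"
    and "\<And>x. F x \<le> 1"
proof -
  have mo: "mono F" and rc: "\<And>x. continuous (at_right x) F" and z: "\<And>x. x < 0 \<Longrightarrow> F x = 0"
    and t: "(F \<longlongrightarrow> 1) at_top" using assms by (auto simp: nonneg_cdf_def)
  have nd: "\<And>x y. x \<le> y \<Longrightarrow> F x \<le> F y" using mo by (simp add: mono_def)
  have b: "(F \<longlongrightarrow> 0) at_bot"
  proof -
    have "eventually (\<lambda>x. F x = 0) at_bot" using z
      by (auto simp: eventually_at_bot_linorder intro!: exI[of _ "-1"])
    then show ?thesis by (rule tendsto_eventually)
  qed
  show rd: "real_distribution (interval_measure F)"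
    by (rule real_distribution_interval_measure[OF nd rc b t])
  interpret Q: real_distribution "interval_measure F" by fact
  show Iic: "\<And>x. measure (interval_measure F) {..x} = F x"
    by (rule measure_interval_measure_Iic[OF nd rc b])
  show "\<And>x. F x \<le> 1"
    using Iic Q.prob_le_1 by metis
  show Ioi: "\<And>x. measure (interval_measure F) {x<..} = 1 - F x"
  proof -
    fix x
    have "{x<..} = space (interval_measure F) - {..x}" by auto
    then show "measure (interval_measure F) {x<..} = 1 - F x"
      using Q.prob_compl[of "{..x}"] Iic by simp
  qed
  show n: "measure (interval_measure F) {..<0} = 0"
  proof -
    have "{..<0::real} = (\<Union>n::nat. {..-1/Suc n})"
    proof (auto)
      fix x :: real assume "x < 0"
      then obtain n :: nat where "1 / Suc n < -x"
        by (metis neg_0_less_iff_less nat_approx_posE)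
      then show "\<exists>n. x \<le> - (1 / (1 + real n))" by (intro exI[of _ n]) auto
    qed (smt (verit) divide_pos_pos of_nat_0_le_iff)
    moreover have "(\<Union>n::nat. {..-1/Suc n}) \<in> null_sets (interval_measure F)"
    proof (rule null_sets_UN)
      fix n :: nat
      have "measure (interval_measure F) {..-1/Suc n} = 0" using Iic z
        by (simp add: divide_pos_pos)
      then show "{..-1/Suc n} \<in> null_sets (interval_measure F)"
        by (simp add: Q.emeasure_eq_measure null_sets_def)
    qed
    ultimately show ?thesis by (simp add: Q.emeasure_eq_measure null_sets_def)
  qed
  show Icc: "\<And>a. 0 \<le> a \<Longrightarrow> measure (interval_measure F) {0..a} = F a"
  proof -
    fix a :: real assume "0 \<le> a"
    then have "{..a} = {..<0} \<union> {0..a}" by auto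
    then have "F a = measure (interval_measure F) ({..<0} \<union> {0..a})"
      using Iic[of a] by simp
    also have "\<dots> = measure (interval_measure F) {..<0} + measure (interval_measure F) {0..a}"
      by (rule Q.finite_measure_Union) auto
    finally have "F a = measure (interval_measure F) {..<0} + measure (interval_measure F) {0..a}" .
    then show "measure (interval_measure F) {0..a} = F a" using n by simp
  qed
  show "measure (interval_measure F) {0..} = 1"
  proof -
    have "{0..} = space (interval_measure F) - {..<0::real}" by auto
    then show ?thesis using Q.prob_compl[of "{..<0}"] n by simp
  qed
  show "\<And>a b. a \<le> b \<Longrightarrow> measure (interval_measure F) {a<..b} = F b - F a"
    by (rule measure_interval_measure_Ioc) (auto simp: nd rc)
qed

lemma pair_ineq:
  assumes "nonneg_cdf F" "1 \<le> x"
  shows "(1 - F x) * F 1 + (1 - F (x-1)) * (F x - F 1) + (1 - F x)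
    \<le> measure (interval_measure F \<Otimes>\<^sub>M interval_measure F) {z. fst z + snd z > x}"
proof -
  let ?Q = "interval_measure F"
  let ?P = "?Q \<Otimes>\<^sub>M ?Q"
  note cf = cdf_facts[OF assms(1)]
  interpret Q: real_distribution ?Q by (rule cf(1))
  interpret P: pair_prob_space ?Q ?Q by (intro pair_prob_space.intro pair_sigma_finite.intro Q.prob_space_axioms Q.sigma_finite_measure_axioms)
  have tim: "measure ?P (A \<times> B) = measure ?Q A * measure ?Q B" if "A \<in> sets borel" "B \<in> sets borel" for A B
  proof -
    have "measure ?P (A \<times> B) = enn2real (emeasure ?Q A * emeasure ?Q B)"
      using Q.emeasure_pair_measure_Times[of A ?Q B] that by (simp add: measure_def)
    also have "\<dots> = measure ?Q A * measure ?Q B"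
      unfolding Q.emeasure_eq_measure by (simp add: ennreal_mult'[symmetric])
    finally show ?thesis .
  qed
  have Ssets: "{z. fst z + snd z > x} \<in> sets ?P"
  proof -
    have "{z. fst z + snd z > x} = {z \<in> space ?P. fst z + snd z > x}"
      by (simp add: space_pair_measure)
    also have "\<dots> \<in> sets ?P" by measurable
    finally show ?thesis .
  qed
  define R1 where "R1 = {x<..} \<times> {0..(1::real)}"
  define R2 where "R2 = {x-1<..} \<times> {1<..x}"
  define R3 where "R3 = {0::real..} \<times> {x<..}"
  have m1: "measure ?P R1 = (1 - F x) * F 1" unfolding R1_def
    by (subst tim) (auto simp: cf)
  have m2: "measure ?P R2 = (1 - F (x-1)) * (F x - F 1)" unfolding R2_def
    by (subst tim) (use assms in \<open>auto simp: cf\<close>)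
  have m3: "measure ?P R3 = (1 - F x)" unfolding R3_def
    by (subst tim) (auto simp: cf)
  have s: "R1 \<in> sets ?P" "R2 \<in> sets ?P" "R3 \<in> sets ?P"
    unfolding R1_def R2_def R3_def by (auto intro!: pair_measureI)
  have "measure ?P (R1 \<union> R2 \<union> R3) = measure ?P (R1 \<union> R2) + measure ?P R3"
    by (rule P.finite_measure_Union) (use s assms(2) in \<open>auto simp: R1_def R2_def R3_def\<close>)
  also have "measure ?P (R1 \<union> R2) = measure ?P R1 + measure ?P R2"
    by (rule P.finite_measure_Union) (use s in \<open>auto simp: R1_def R2_def\<close>)
  finally have eq: "measure ?P (R1 \<union> R2 \<union> R3) = (1 - F x) * F 1 + (1 - F (x-1)) * (F x - F 1) + (1 - F x)"
    using m1 m2 m3 by simp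
  have "R1 \<union> R2 \<union> R3 \<subseteq> {z. fst z + snd z > x}"
    unfolding R1_def R2_def R3_def by auto
  then have "measure ?P (R1 \<union> R2 \<union> R3) \<le> measure ?P {z. fst z + snd z > x}"
    by (rule P.finite_measure_mono[OF _ Ssets])
  then show ?thesis using eq by simp
qed

lemma heavy_tail:
  assumes sub: "subexponential F" and c: "c > 0"
  shows "\<exists>K>0. \<exists>X. \<forall>x\<ge>X. K * exp (-c*x) \<le> 1 - F x"
proof -
  have nc: "nonneg_cdf F" using sub by (simp add: subexponential_def)
  note cf = cdf_facts[OF nc]
  have mo: "mono F" and t: "(F \<longlongrightarrow> 1) at_top" using nc by (auto simp: nonneg_cdf_def)
  have nd: "\<And>x y. x \<le> y \<Longrightarrow> F x \<le> F y" using mo by (simp add: mono_def)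
  define G where "G x = 1 - F x" for x
  define r where "r x = measure (interval_measure F \<Otimes>\<^sub>M interval_measure F) {z. fst z + snd z > x} / G x" for x
  have r2: "(r \<longlongrightarrow> 2) at_top" using sub unfolding subexponential_def r_def G_def by simp
  have Gnn: "\<And>x. 0 \<le> G x" using cf(8) by (simp add: G_def)
  have Ganti: "\<And>x y. x \<le> y \<Longrightarrow> G y \<le> G x" using nd by (simp add: G_def)
  have "eventually (\<lambda>x. r x > 1) at_top"
    using r2 by (rule order_tendstoD) simp
  then obtain X1 where X1: "\<And>x. x \<ge> X1 \<Longrightarrow> r x > 1" by (auto simp: eventually_at_top_linorder)
  have Gpos: "G y > 0" for y
  proof -
    have "r (max y X1) > 1" using X1 by simp
    then have "G (max y X1) \<noteq> 0" by (auto simp: r_def)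
    then have "G (max y X1) > 0" using Gnn[of "max y X1"] by simp
    moreover have "G (max y X1) \<le> G y" by (rule Ganti) simp
    ultimately show ?thesis by simp
  qed
  have F1: "F 1 < 1" using Gpos[of 1] by (simp add: G_def)
  define g where "g x = (r x - 1 - F 1) / (F x - F 1)" for x
  have "(g \<longlongrightarrow> (2 - 1 - F 1) / (1 - F 1)) at_top"
    unfolding g_def by (intro tendsto_intros r2 t) (use F1 in simp)
  moreover have "(2 - 1 - F 1) / (1 - F 1) = 1" using F1 by simp
  ultimately have g1: "(g \<longlongrightarrow> 1) at_top" by simp
  have e1: "eventually (\<lambda>x. g x < exp c) at_top"
    using g1 by (rule order_tendstoD) (use c in simp)
  have e2: "eventually (\<lambda>x. F x > F 1) at_top"
    using t by (rule order_tendstoD) (use F1 in simp)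
  have e3: "eventually (\<lambda>x. x \<ge> (1::real)) at_top" by (rule eventually_ge_at_top)
  from eventually_conj[OF e1 eventually_conj[OF e2 e3]]
  obtain X0 where X0: "\<And>x. x \<ge> X0 \<Longrightarrow> g x < exp c \<and> F x > F 1 \<and> x \<ge> 1"
    by (auto simp: eventually_at_top_linorder)
  have step: "G (x - 1) \<le> exp c * G x" if "x \<ge> X0" for x
  proof -
    have gx: "g x < exp c" "F x > F 1" "x \<ge> 1" using X0[OF that] by auto
    have pi: "G x * F 1 + G (x-1) * (F x - F 1) + G x \<le> r x * G x"
      using pair_ineq[OF nc gx(3)] Gpos[of x] by (simp add: r_def G_def)
    then have "G (x-1) * (F x - F 1) \<le> (r x - 1 - F 1) * G x" by (simp add: algebra_simps)
    then have "G (x-1) \<le> (r x - 1 - F 1) * G x / (F x - F 1)"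
      using gx(2) by (simp add: pos_le_divide_eq)
    also have "\<dots> = g x * G x" by (simp add: g_def)
    also have "\<dots> \<le> exp c * G x" using gx(1) Gpos[of x] by simp
    finally show ?thesis .
  qed
  have ind: "\<forall>x. X0 \<le> x \<longrightarrow> x \<le> X0 + real n \<longrightarrow> exp (-c * real n) * G X0 \<le> G x" for n :: nat
  proof (induction n)
    case 0
    then show ?case by simp
  next
    case (Suc n)
    show ?case
    proof (intro allI impI)
      fix x assume a: "X0 \<le> x" "x \<le> X0 + real (Suc n)"
      have em: "exp (-c * real (Suc n)) \<le> exp (-c * real n)" using c by simp
      show "exp (-c * real (Suc n)) * G X0 \<le> G x"
      proof (cases "x \<le> X0 + real n")
        case True
        then have "exp (-c * real n) * G X0 \<le> G x" using Suc a by blast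
        moreover have "exp (-c * real (Suc n)) * G X0 \<le> exp (-c * real n) * G X0"
          using em Gpos[of X0] by (simp add: mult_right_mono)
        ultimately show ?thesis by linarith
      next
        case False
        have h1: "exp (-c * real n) * G X0 \<le> G (x - 1)"
        proof (cases "X0 \<le> x - 1")
          case True
          then show ?thesis using Suc a by auto
        next
          case False
          then have "G X0 \<le> G (x - 1)" by (intro Ganti) simp
          moreover have "exp (-c * real n) * G X0 \<le> G X0"
            using c Gpos[of X0] by (simp add: mult_le_cancel_right1)
          ultimately show ?thesis by linarith
        qed
        have "exp (-c * real (Suc n)) * G X0 = exp (-c) * (exp (-c * real n) * G X0)"
          by (simp add: algebra_simps exp_add[symmetric])
        also have "\<dots> \<le> exp (-c) * G (x - 1)" using h1 by simp
        also have "\<dots> \<le> exp (-c) * (exp c * G x)" using step[OF a(1)] by simp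
        also have "\<dots> = G x" by (simp add: exp_minus field_simps)
        finally show ?thesis .
      qed
    qed
  qed
  define K where "K = G X0 * exp (c * (X0 - 1))"
  have "K > 0" using Gpos by (simp add: K_def)
  moreover have "\<forall>x\<ge>X0. K * exp (-c*x) \<le> 1 - F x"
  proof (intro allI impI)
    fix x assume x: "x \<ge> X0"
    define n where "n = nat \<lceil>x - X0\<rceil>"
    have n1: "x \<le> X0 + real n" "real n \<le> x - X0 + 1" using x unfolding n_def by linarith+
    have "K * exp (-c*x) = exp (-c * (x - X0 + 1)) * G X0"
      by (simp add: K_def algebra_simps exp_add[symmetric])
    also have "\<dots> \<le> exp (-c * real n) * G X0"
      using n1 c Gpos[of X0] by (intro mult_right_mono) (auto simp: mult_le_cancel_left_pos)
    also have "\<dots> \<le> G x" using ind[of n] x n1 by blast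
    finally show "K * exp (-c*x) \<le> 1 - F x" by (simp add: G_def)
  qed
  ultimately show ?thesis by blast
qed

lemma partial_mono:
  fixes f :: "nat \<Rightarrow> real"
  assumes "\<And>i. 1 \<le> i \<Longrightarrow> 0 \<le> (f i :: real)" "m \<le> n"
  shows "(\<Sum>j=1..m. f j) \<le> (\<Sum>j=1..n. f j)"
  by (rule sum_mono2) (use assms in auto)

lemma card_iff:
  fixes f :: "nat \<Rightarrow> real"
  assumes nn: "\<And>i. 1 \<le> i \<Longrightarrow> 0 \<le> (f i :: real)"
    and fin: "finite {i. 1 \<le> i \<and> (\<Sum>j=1..i. f j) \<le> t}" and m: "1 \<le> m"
  shows "m \<le> card {i. 1 \<le> i \<and> (\<Sum>j=1..i. f j) \<le> t} \<longleftrightarrow> (\<Sum>j=1..m. f j) \<le> t"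
proof
  assume h: "(\<Sum>j=1..m. f j) \<le> t"
  have "{1..m} \<subseteq> {i. 1 \<le> i \<and> (\<Sum>j=1..i. f j) \<le> t}"
  proof
    fix i assume "i \<in> {1..m}"
    then have "1 \<le> i" "i \<le> m" by auto
    then show "i \<in> {i. 1 \<le> i \<and> (\<Sum>j=1..i. f j) \<le> t}"
      using partial_mono[of f i m, OF nn] h by auto
  qed
  from card_mono[OF fin this] show "m \<le> card {i. 1 \<le> i \<and> (\<Sum>j=1..i. f j) \<le> t}" by simp
next
  assume h: "m \<le> card {i. 1 \<le> i \<and> (\<Sum>j=1..i. f j) \<le> t}"
  show "(\<Sum>j=1..m. f j) \<le> t"
  proof (rule ccontr)
    assume n: "\<not> (\<Sum>j=1..m. f j) \<le> t"
    have "{i. 1 \<le> i \<and> (\<Sum>j=1..i. f j) \<le> t} \<subseteq> {1..<m}"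
    proof
      fix i assume i: "i \<in> {i. 1 \<le> i \<and> (\<Sum>j=1..i. f j) \<le> t}"
      show "i \<in> {1..<m}"
      proof (rule ccontr)
        assume "i \<notin> {1..<m}"
        then have "m \<le> i" using i by auto
        then show False using partial_mono[of f m i, OF nn] i n by auto
      qed
    qed
    from card_mono[OF _ this] have "card {i. 1 \<le> i \<and> (\<Sum>j=1..i. f j) \<le> t} \<le> m - 1" by simp
    then show False using h m by linarith
  qed
qed

lemma ldp_bound:
  assumes L: "LDP M Z I" and A: "closed A" and lt: "- (INF x\<in>A. I x) < ereal (-c)"
  shows "\<exists>S0. \<forall>t\<ge>S0. t > 0 \<longrightarrow> measure M {\<omega> \<in> space M. Z t \<omega> \<in> A} \<le> exp (-c*t)"
proof -
  have "Limsup at_top (\<lambda>t. ereal (1 / t) * elog (measure M {\<omega> \<in> space M. Z t \<omega> \<in> A}))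
          \<le> - (INF x\<in>A. I x)" using L A by (simp add: LDP_def)
  then have "Limsup at_top (\<lambda>t. ereal (1 / t) * elog (measure M {\<omega> \<in> space M. Z t \<omega> \<in> A})) < ereal (-c)"
    using lt by simp
  from Limsup_lessD[OF this] obtain S0 where
    S0: "\<And>t. t \<ge> S0 \<Longrightarrow> ereal (1 / t) * elog (measure M {\<omega> \<in> space M. Z t \<omega> \<in> A}) < ereal (-c)"
    by (auto simp: eventually_at_top_linorder)
  show ?thesis
  proof (intro exI allI impI)
    fix t :: real assume t: "S0 \<le> t" "0 < t"
    define P where "P = measure M {\<omega> \<in> space M. Z t \<omega> \<in> A}"
    show "measure M {\<omega> \<in> space M. Z t \<omega> \<in> A} \<le> exp (-c*t)"
    proof (cases "P \<le> 0")
      case True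
      then show ?thesis using measure_nonneg[of M] unfolding P_def
        by (smt (verit) exp_gt_zero)
    next
      case False
      then have "ereal (1 / t) * ereal (ln P) < ereal (-c)" using S0[OF t(1)]
        by (simp add: P_def elog_def)
      then have "ln P / t < -c" by simp
      then have "ln P < -c * t" using t(2) by (simp add: divide_less_eq)
      then have "exp (ln P) < exp (-c*t)" by simp
      then have "P < exp (-c*t)" using False by simp
      then show ?thesis unfolding P_def by simp
    qed
  qed
qed

lemma half_lem: "(x::real) < b \<Longrightarrow> 0 < x \<Longrightarrow> x < (x+b)/2 \<and> (x+b)/2 < b \<and> 0 < (x+b)/2"
  by (auto simp: field_simps)

theorem lemma2:
  fixes M :: "'a measure"
    and T C :: "nat \<Rightarrow> 'a \<Rightarrow> real"
    and N :: "real \<Rightarrow> 'a \<Rightarrow> nat"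
    and p \<mu> :: real
    and I :: "real \<Rightarrow> ereal"
  assumes M: "prob_space M"
    and T_meas: "\<And>i. T i \<in> borel_measurable M"
    and C_meas: "\<And>i. C i \<in> borel_measurable M"
    and T_pos: "\<And>i \<omega>. 1 \<le> i \<Longrightarrow> \<omega> \<in> space M \<Longrightarrow> T i \<omega> > 0"
    and N_fin: "\<And>t \<omega>. \<omega> \<in> space M \<Longrightarrow> finite {i. 1 \<le> i \<and> (\<Sum>j=1..i. T j \<omega>) \<le> t}"
    and N_def: "\<And>t \<omega>. \<omega> \<in> space M \<Longrightarrow> N t \<omega> = card {i. 1 \<le> i \<and> (\<Sum>j=1..i. T j \<omega>) \<le> t}"
    and C_indep: "prob_space.indep_vars M (\<lambda>_. borel) C {1..}"
    and C_ident: "\<And>i. 1 \<le> i \<Longrightarrow> distr M borel (C i) = distr M borel (C 1)"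
    and C_nonneg: "\<And>i \<omega>. 1 \<le> i \<Longrightarrow> \<omega> \<in> space M \<Longrightarrow> 0 \<le> C i \<omega>"
    and C_int: "integrable M (C 1)"
    and CT_indep: "prob_space.indep_var M
        (Pi\<^sub>M {1..} (\<lambda>_. borel)) (\<lambda>\<omega>. \<lambda>i\<in>{1..}. C i \<omega>)
        (Pi\<^sub>M {1..} (\<lambda>_. borel)) (\<lambda>\<omega>. \<lambda>i\<in>{1..}. T i \<omega>)"
    and p_pos: "p > 0"
    and mu_pos: "\<mu> > 0"
    and A1_i: "LDP M (\<lambda>t \<omega>. real (N t \<omega>) / t) I"
    and A1_i_zero: "\<And>x. I x = 0 \<longleftrightarrow> x = \<mu>"
    and A1_ii_inc: "\<And>x y. \<mu> \<le> x \<Longrightarrow> x \<le> y \<Longrightarrow> I x \<le> I y"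
    and A1_ii_dec: "\<And>x y. 0 \<le> x \<Longrightarrow> x \<le> y \<Longrightarrow> y \<le> \<mu> \<Longrightarrow> I y \<le> I x"
    and A1_iii: "\<mu> * integral\<^sup>L M (C 1) / p < 1"
    and A1_iv: "\<exists>\<theta>>0. \<forall>n. integrable M (\<lambda>\<omega>. exp (\<theta> * (\<Sum>i=1..n. T i \<omega>)))"
    and B0_sub: "subexponential (integrated_tail M (C 1))"
  shows "\<exists>\<epsilon>0>0. \<forall>\<epsilon>. 0 < \<epsilon> \<and> \<epsilon> < \<epsilon>0 \<longrightarrow>
           ((\<lambda>u. measure M {\<omega> \<in> space M.
                 (SUP n\<in>{1..}. ereal (real n * (p / \<mu> - \<epsilon>) - p * (\<Sum>i=1..n. T i \<omega>))) \<ge> ereal u}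
               / (1 - integrated_tail M (C 1) u)) \<longlongrightarrow> 0) at_top"
proof -
  interpret P: prob_space M by (rule M)
  have Tm[measurable]: "\<And>i. T i \<in> borel_measurable M" by (rule T_meas)
  have Tnn: "\<And>i \<omega>. \<omega> \<in> space M \<Longrightarrow> 1 \<le> i \<Longrightarrow> 0 \<le> T i \<omega>"
    using T_pos by (simp add: less_imp_le)
  define \<epsilon>0 where "\<epsilon>0 = p / \<mu>"
  have e0: "\<epsilon>0 > 0" using p_pos mu_pos by (simp add: \<epsilon>0_def)
  have Inn: "\<And>x. 0 \<le> I x" using A1_i by (simp add: LDP_def rate_function_def)
  show ?thesis
  proof (intro exI[of _ \<epsilon>0] conjI allI impI e0)
    fix \<epsilon> assume eps: "0 < \<epsilon> \<and> \<epsilon> < \<epsilon>0"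
    define a where "a = p / \<mu> - \<epsilon>"
    have a_pos: "a > 0" using eps by (simp add: a_def \<epsilon>0_def)
    have "\<mu> * a < p" using mu_pos eps p_pos by (simp add: a_def algebra_simps)
    then have pa: "\<mu> < p / a" using a_pos by (simp add: pos_less_divide_eq mult.commute)
    define \<mu>' where "\<mu>' = (\<mu> + p / a) / 2"
    have mu'1: "\<mu> < \<mu>'" "\<mu>' < p / a" "0 < \<mu>'" using half_lem[OF pa mu_pos] unfolding \<mu>'_def by auto
    have amu: "a * \<mu>' \<le> p" using mu'1(2) a_pos by (simp add: pos_less_divide_eq mult.commute less_imp_le)
    have Ipos: "0 < I \<mu>'" using Inn[of \<mu>'] A1_i_zero[of \<mu>'] mu'1(1) by (auto simp: order_le_less)
    obtain r where r: "0 < ereal r" "ereal r < I \<mu>'" using ereal_dense2[OF Ipos] by blast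
    define c where "c = r / 2"
    have c_pos: "c > 0" using r by (simp add: c_def)
    have INFb: "ereal (2*c) \<le> (INF x\<in>{\<mu>'..}. I x)"
    proof (rule INF_greatest)
      fix x assume "x \<in> {\<mu>'..}"
      then have "I \<mu>' \<le> I x" using A1_ii_inc[of \<mu>' x] mu'1 by auto
      then show "ereal (2*c) \<le> I x" using r by (simp add: c_def)
    qed
    have "- (INF x\<in>{\<mu>'..}. I x) \<le> - ereal (2*c)" using INFb by (simp only: ereal_minus_le_minus)
    also have "\<dots> < ereal (-c)" using c_pos by simp
    finally have lt: "- (INF x\<in>{\<mu>'..}. I x) < ereal (-c)" .
    obtain S0 where S0: "\<And>t. t \<ge> S0 \<Longrightarrow> t > 0 \<Longrightarrow>
        measure M {\<omega> \<in> space M. real (N t \<omega>) / t \<in> {\<mu>'..}} \<le> exp (-c*t)"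
      using ldp_bound[OF A1_i _ lt] by auto
    have setid: "{\<omega> \<in> space M. real (N t \<omega>) / t \<in> {\<mu>'..}} =
        {\<omega> \<in> space M. (\<Sum>j=1..nat \<lceil>\<mu>' * t\<rceil>. T j \<omega>) \<le> t}" if t: "t > 0" for t
    proof (intro Collect_cong conj_cong refl)
      fix \<omega> assume w: "\<omega> \<in> space M"
      have "0 < \<lceil>\<mu>' * t\<rceil>" using mult_pos_pos[OF mu'1(3) t] by simp
      then have m1: "1 \<le> nat \<lceil>\<mu>' * t\<rceil>" by (simp add: le_nat_iff)
      have "real (N t \<omega>) / t \<in> {\<mu>'..} \<longleftrightarrow> \<mu>' * t \<le> real (N t \<omega>)"
        using t by (simp add: pos_le_divide_eq)
      also have "\<dots> \<longleftrightarrow> nat \<lceil>\<mu>' * t\<rceil> \<le> N t \<omega>"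
        by (simp add: nat_le_iff ceiling_le_iff)
      also have "\<dots> \<longleftrightarrow> (\<Sum>j=1..nat \<lceil>\<mu>' * t\<rceil>. T j \<omega>) \<le> t"
        unfolding N_def[OF w] by (rule card_iff[OF Tnn[OF w] N_fin[OF w] m1])
      finally show "real (N t \<omega>) / t \<in> {\<mu>'..} \<longleftrightarrow> (\<Sum>j=1..nat \<lceil>\<mu>' * t\<rceil>. T j \<omega>) \<le> t" .
    qed
    define L where "L = 1 / (2 * a * \<mu>')"
    have L_pos: "L > 0" using a_pos mu'1 by (simp add: L_def)
    define \<beta> where "\<beta> = c * L / 2"
    have b_pos: "\<beta> > 0" using c_pos L_pos by (simp add: \<beta>_def)
    define q where "q = exp (-c)"
    have q: "0 < q" "q < 1" using c_pos by (auto simp: q_def)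
    define Cc where "Cc = q / (1 - q)"
    define E where "E u = {\<omega> \<in> space M.
                 (SUP n\<in>{1..}. ereal (real n * (p / \<mu> - \<epsilon>) - p * (\<Sum>i=1..n. T i \<omega>))) \<ge> ereal u}" for u
    define U0 where "U0 = max (4 * a * \<mu>') (2 * (S0 - 1) / L) + 1"
    have bound: "measure M (E u) \<le> Cc * exp (-\<beta> * u)" if u: "u \<ge> U0" for u
    proof -
      define v where "v = u / 2"
      have v1: "2 * a * \<mu>' \<le> v" using u by (simp add: U0_def v_def)
      have v2: "S0 \<le> 1 + L * v"
      proof -
        have "2 * (S0 - 1) / L \<le> u" using u by (simp add: U0_def)
        then have "2 * (S0 - 1) \<le> u * L" using L_pos by (simp add: pos_divide_le_eq)
        then show ?thesis by (simp add: v_def algebra_simps)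
      qed
      have v_pos: "v > 0" using v1 a_pos mu'1 by (smt (verit) mult_pos_pos)
      define s where "s k = real k + 1 + L * v" for k :: nat
      define m where "m k = nat \<lceil>\<mu>' * s k\<rceil>" for k
      define A where "A k = {\<omega> \<in> space M. (\<Sum>j=1..m k. T j \<omega>) \<le> s k}" for k
      have s_pos: "s k > 0" for k using L_pos v_pos by (simp add: s_def add_pos_nonneg)
      have Asets: "A k \<in> sets M" for k unfolding A_def by measurable
      have incl: "E u \<subseteq> (\<Union>k. A k)"
      proof
        fix \<omega> assume w: "\<omega> \<in> E u"
        then have wsp: "\<omega> \<in> space M" by (simp add: E_def)
        have "ereal v < ereal u" using v_pos by (simp add: v_def)
        also have "\<dots> \<le> (SUP n\<in>{1..}. ereal (real n * a - p * (\<Sum>i=1..n. T i \<omega>)))"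
          using w by (simp add: E_def a_def)
        finally obtain n where n: "n \<in> {1..}" "v < real n * a - p * (\<Sum>i=1..n. T i \<omega>)"
          by (auto simp: less_SUP_iff)
        define Sn where "Sn = (\<Sum>i=1..n. T i \<omega>)"
        have Sn_pos: "Sn > 0" unfolding Sn_def
          by (rule sum_pos) (use n T_pos[OF _ wsp] in auto)
        define t where "t = (real n * a - v) / p"
        have St: "Sn < t" using n p_pos by (simp add: t_def Sn_def pos_less_divide_eq algebra_simps)
        define k where "k = nat \<lfloor>t\<rfloor>"
        have kt: "real k \<le> t" "t < real k + 1" using St Sn_pos unfolding k_def by linarith+
        have na: "real n * a = p * t + v" using p_pos by (simp add: t_def)
        have "a * (\<mu>' * s k) = a * \<mu>' * real k + a * \<mu>' + v / 2"
          using a_pos mu'1 by (simp add: s_def L_def field_simps)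
        also have "\<dots> \<le> p * real k + v / 2 + v / 2"
          using amu v1 by (intro add_mono mult_right_mono) auto
        also have "\<dots> \<le> a * real n" using na kt p_pos by (simp add: mult.commute)
        finally have "\<mu>' * s k \<le> real n" using a_pos by simp
        then have mn: "m k \<le> n" unfolding m_def by (simp add: nat_le_iff ceiling_le_iff)
        have "(\<Sum>j=1..m k. T j \<omega>) \<le> Sn"
          unfolding Sn_def by (rule partial_mono[OF _ mn]) (use Tnn[OF wsp] in auto)
        also have "\<dots> \<le> s k" using St kt L_pos v_pos by (simp add: s_def) (smt (verit) mult_pos_pos)
        finally have "\<omega> \<in> A k" using wsp by (simp add: A_def)
        then show "\<omega> \<in> (\<Union>k. A k)" by blast
      qed
      have Ab: "measure M (A k) \<le> exp (-\<beta> * u) * (q * q ^ k)" for k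
      proof -
        have "measure M (A k) = measure M {\<omega> \<in> space M. real (N (s k) \<omega>) / s k \<in> {\<mu>'..}}"
          unfolding A_def m_def using setid[OF s_pos[of k]] by simp
        also have "\<dots> \<le> exp (-c * s k)" using S0[OF _ s_pos[of k]] v2 by (simp add: s_def)
        also have "\<dots> = exp (-\<beta> * u) * (q * q ^ k)"
        proof -
          have "q ^ k = exp (real k * (-c))" unfolding q_def by (rule exp_of_nat_mult[symmetric])
          then have "exp (-\<beta> * u) * (q * q ^ k) = exp (-\<beta> * u + (-c) + real k * (-c))"
            by (simp add: q_def mult_exp_exp algebra_simps)
          also have "-\<beta> * u + (-c) + real k * (-c) = -c * s k"
            by (simp add: \<beta>_def s_def v_def algebra_simps)
          finally show ?thesis by simp
        qed
        finally show ?thesis .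
      qed
      have sg: "summable (\<lambda>k. exp (-\<beta> * u) * (q * q ^ k))"
        by (intro summable_mult summable_geometric) (use q in simp)
      have sA: "summable (\<lambda>k. measure M (A k))"
        by (rule summable_comparison_test'[OF sg, of 0]) (use Ab in simp)
      have "measure M (E u) \<le> measure M (\<Union>k. A k)"
        by (rule P.finite_measure_mono[OF incl]) (use Asets in auto)
      also have "\<dots> \<le> (\<Sum>k. measure M (A k))"
        by (rule P.finite_measure_subadditive_countably) (use Asets sA in auto)
      also have "\<dots> \<le> (\<Sum>k. exp (-\<beta> * u) * (q * q ^ k))"
        by (rule suminf_le[OF Ab sA sg])
      also have "\<dots> = exp (-\<beta> * u) * (q * (1 / (1 - q)))"
        using q by (simp add: suminf_mult suminf_geometric summable_geometric)
      also have "\<dots> = Cc * exp (-\<beta> * u)" by (simp add: Cc_def)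
      finally show ?thesis .
    qed
    obtain K X where K: "K > 0" and KX: "\<And>x. x \<ge> X \<Longrightarrow> K * exp (-(\<beta>/2)*x) \<le> 1 - integrated_tail M (C 1) x"
      using heavy_tail[OF B0_sub, of "\<beta>/2"] b_pos by auto
    define R where "R u = measure M (E u) / (1 - integrated_tail M (C 1) u)" for u
    have up: "eventually (\<lambda>u. R u \<le> (Cc / K) * exp (-(\<beta>/2)*u)) at_top"
    proof (rule eventually_mono[OF eventually_ge_at_top[of "max U0 X"]])
      fix u assume u: "max U0 X \<le> u"
      have D: "K * exp (-(\<beta>/2)*u) \<le> 1 - integrated_tail M (C 1) u" using KX u by simp
      have Dp: "0 < K * exp (-(\<beta>/2)*u)" using K by simp
      have "R u \<le> Cc * exp (-\<beta> * u) / (K * exp (-(\<beta>/2)*u))"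
        unfolding R_def
        by (rule frac_le) (use bound[of u] u D Dp q in \<open>auto simp: Cc_def\<close>)
      also have "\<dots> = (Cc / K) * exp (-(\<beta>/2)*u)"
      proof -
        have "exp (-\<beta> * u) = exp (-(\<beta>/2)*u) * exp (-(\<beta>/2)*u)" by (simp add: exp_add[symmetric])
        then show ?thesis using K by simp
      qed
      finally show "R u \<le> (Cc / K) * exp (-(\<beta>/2)*u)" .
    qed
    have low: "eventually (\<lambda>u. 0 \<le> R u) at_top"
    proof (rule eventually_mono[OF eventually_ge_at_top[of X]])
      fix u assume u: "X \<le> u"
      have "0 \<le> 1 - integrated_tail M (C 1) u" using KX[OF u] K
        by (smt (verit) exp_gt_zero mult_pos_pos)
      then show "0 \<le> R u" by (simp add: R_def)
    qed
    have lim0: "((\<lambda>u. (Cc / K) * exp (-(\<beta>/2)*u)) \<longlongrightarrow> 0) at_top"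
    proof -
      have "filterlim (\<lambda>u::real. (-(\<beta>/2)) * u) at_bot at_top"
        by (rule filterlim_tendsto_neg_mult_at_bot[OF tendsto_const _ filterlim_ident]) (use b_pos in simp)
      then have "((\<lambda>u. exp (-(\<beta>/2)*u)) \<longlongrightarrow> 0) at_top"
        by (rule filterlim_compose[OF exp_at_bot])
      then show ?thesis by (rule tendsto_mult_right_zero)
    qed
    have "(R \<longlongrightarrow> 0) at_top"
      by (rule tendsto_sandwich[OF low up tendsto_const lim0])
    then show "((\<lambda>u. measure M {\<omega> \<in> space M.
                 (SUP n\<in>{1..}. ereal (real n * (p / \<mu> - \<epsilon>) - p * (\<Sum>i=1..n. T i \<omega>))) \<ge> ereal u}
               / (1 - integrated_tail M (C 1) u)) \<longlongrightarrow> 0) at_top"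
      unfolding R_def[abs_def] E_def .
  qed
qed

end
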